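(* (Compatibility.) Let $E$ be an evident branch. For every type $\sigma$, every $n\ge 0$, all terms $s,t$ of type $\sigma$, and all terms $xs_1\dots s_n$, $xt_1\dots t_n$ of type $\sigma$ with $x$ a variable: (1) it is not the case that both $s\asymp_\sigma t$ and $[s]\not\parallel[t]$; (2) either $xs_1\dots s_n\asymp_\sigma xt_1\dots t_n$ or $[s_i]\not\parallel[t_i]$ for some $i\in\{1,\dots,n\}$.
   Context: Types: a countable set of base types including a distinguished $o$; other base types are sorts ($\alpha$). Types: base types and $\sigma\tau$ (functions from $\sigma$ to $\tau$; $\sigma\tau\mu=\sigma(\tau\mu)$). Countably many names with unique types, infinitely many per type. Terms: names; $st:\mu$ for $s:\tau\mu,t:\tau$; $\lambda x.t:\sigma\tau$ for a name $x:\sigma$, $t:\tau$. $\mathrm{Wff}_\sigma$: terms of type $\sigma$. Logical constants: $\neg:oo$, $=_\sigma:\sigma\sigma o$; other names are variables. Formulas: terms of type $o$; $s=_\sigma t$ is $(=_\sigma s)t$; $s\neq_\sigma t$ is $\neg(s=_\sigma t)$. A fixed type-preserving total normalization operator $[\cdot]$ on terms, with $s$ normal iff $[s]=s$, satisfies $[[s]]=[s]$, $[[s]t]=[st]$, and $[ys_1\dots s_n]=y[s_1]\dots[s_n]$ for any name $y$, $n\ge0$, with $ys_1\dots s_n$ of base type. A branch is a set of normal formulas. $E$ is evident if ($x$ ranges over variables): (DN) $\neg\neg s\in E\Rightarrow s\in E$; (BQ) $s=_ot\in E\Rightarrow$ ($s,t\in E$ or $\neg s,\neg t\in E$); (BE)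 $s\neq_ot\in E\Rightarrow$ ($s,\neg t\in E$ or $\neg s,t\in E$); (FQ) $s=_{\sigma\tau}t\in E\Rightarrow[su]=[tu]\in E$ for all normal $u:\sigma$; (FE) $s\neq_{\sigma\tau}t\in E\Rightarrow[sx]\neq[tx]\in E$ for some variable $x$; (Mat) $xs_1\dots s_n,\neg xt_1\dots t_n\in E\Rightarrow n\ge1$ and $s_i\neq t_i\in E$ for some $i$; (Dec) $xs_1\dots s_n\neq_\alpha xt_1\dots t_n\in E\Rightarrow n\ge 1$ and $s_i\neq t_i\in E$ for some $i$; (Con) $s=_\alpha t,u\neq_\alpha v\in E\Rightarrow$ ($s\neq u,t\neq u\in E$) or ($s\neq v,t\neq v\in E$). Notation: $s\not\parallel t$ means $E$ contains $s\neq t$ or $t\neq s$. Compatibility relations $\asymp_\sigma\subseteq\mathrm{Wff}_\sigma\times\mathrm{Wff}_\sigma$ are defined by induction on types: $s\asymp_o t$ iff $\{[s],\neg[t]\}\not\subseteq E$ and $\{\neg[s],[t]\}\not\subseteq E$; for a sort $\alpha$, $s\asymp_\alpha t$ iff not $[s]\not\parallel[t]$; $s\asymp_{\sigma\tau}t$ iff $su\asymp_\tau tv$ whenever $u\asymp_\sigma v$. *)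

theory Defs
  imports Main
begin

datatype ty = Base nat | Fn ty ty

abbreviation tyo :: ty where "tyo \<equiv> Base 0"

definition is_sort :: "ty \<Rightarrow> bool" where
  "is_sort a \<longleftrightarrow> (\<exists>k. k \<noteq> 0 \<and> a = Base k)"

datatype name = NegC | EqC ty | Var nat ty

fun nty :: "name \<Rightarrow> ty" where
  "nty NegC = Fn tyo tyo"
| "nty (EqC s) = Fn s (Fn s tyo)"
| "nty (Var k s) = s"

definition is_var :: "name \<Rightarrow> bool" where
  "is_var x \<longleftrightarrow> (\<exists>k s. x = Var k s)"

datatype tm = Nm name | App tm tm | Lam name tm

inductive has_ty :: "tm \<Rightarrow> ty \<Rightarrow> bool" where
  "has_ty (Nm x) (nty x)"
| "has_ty s (Fn \<sigma> \<tau>) \<Longrightarrow> has_ty t \<sigma> \<Longrightarrow> has_ty (App s t) \<tau>"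
| "has_ty t \<tau> \<Longrightarrow> has_ty (Lam x t) (Fn (nty x) \<tau>)"

definition Wff :: "ty \<Rightarrow> tm set" where
  "Wff \<sigma> = {t. has_ty t \<sigma>}"

definition apps :: "tm \<Rightarrow> tm list \<Rightarrow> tm" where
  "apps h ss = foldl App h ss"

definition neg :: "tm \<Rightarrow> tm" where
  "neg s = App (Nm NegC) s"

definition eq :: "ty \<Rightarrow> tm \<Rightarrow> tm \<Rightarrow> tm" where
  "eq \<sigma> s t = App (App (Nm (EqC \<sigma>)) s) t"

definition neq :: "ty \<Rightarrow> tm \<Rightarrow> tm \<Rightarrow> tm" where
  "neq \<sigma> s t = neg (eq \<sigma> s t)"

definition is_norm :: "(tm \<Rightarrow> tm) \<Rightarrow> bool" where
  "is_norm N \<longleftrightarrow>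
     (\<forall>\<sigma> s. s \<in> Wff \<sigma> \<longrightarrow> N s \<in> Wff \<sigma>) \<and>
     (\<forall>\<sigma> s. s \<in> Wff \<sigma> \<longrightarrow> N (N s) = N s) \<and>
     (\<forall>\<sigma> \<tau> s t. s \<in> Wff (Fn \<sigma> \<tau>) \<longrightarrow> t \<in> Wff \<sigma> \<longrightarrow> N (App (N s) t) = N (App s t)) \<and>
     (\<forall>y ss k. apps (Nm y) ss \<in> Wff (Base k) \<longrightarrow>
        N (apps (Nm y) ss) = apps (Nm y) (map N ss))"

definition normal :: "(tm \<Rightarrow> tm) \<Rightarrow> tm \<Rightarrow> bool" where
  "normal N s \<longleftrightarrow> N s = s"

definition branch :: "(tm \<Rightarrow> tm) \<Rightarrow> tm set \<Rightarrow> bool" where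
  "branch N E \<longleftrightarrow> (\<forall>s\<in>E. s \<in> Wff tyo \<and> normal N s)"

definition neq_in :: "tm set \<Rightarrow> tm \<Rightarrow> tm \<Rightarrow> bool" where
  "neq_in E s t \<longleftrightarrow> (\<exists>\<sigma>. neq \<sigma> s t \<in> E)"

definition npar :: "tm set \<Rightarrow> tm \<Rightarrow> tm \<Rightarrow> bool" where
  "npar E s t \<longleftrightarrow> neq_in E s t \<or> neq_in E t s"

definition evident :: "(tm \<Rightarrow> tm) \<Rightarrow> tm set \<Rightarrow> bool" where
  "evident N E \<longleftrightarrow>
    \<comment> \<open>DN\<close>
    (\<forall>s. neg (neg s) \<in> E \<longrightarrow> s \<in> E) \<and>
    \<comment> \<open>BQ\<close>
    (\<forall>s t. eq tyo s t \<in> E \<longrightarrow> (s \<in> E \<and> t \<in> E) \<or> (neg s \<in> E \<and> neg t \<in> E)) \<and>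
    \<comment> \<open>BE\<close>
    (\<forall>s t. neq tyo s t \<in> E \<longrightarrow> (s \<in> E \<and> neg t \<in> E) \<or> (neg s \<in> E \<and> t \<in> E)) \<and>
    \<comment> \<open>FQ\<close>
    (\<forall>\<sigma> \<tau> s t. eq (Fn \<sigma> \<tau>) s t \<in> E \<longrightarrow>
       (\<forall>u. u \<in> Wff \<sigma> \<and> normal N u \<longrightarrow> eq \<tau> (N (App s u)) (N (App t u)) \<in> E)) \<and>
    \<comment> \<open>FE\<close>
    (\<forall>\<sigma> \<tau> s t. neq (Fn \<sigma> \<tau>) s t \<in> E \<longrightarrow>
       (\<exists>k. neq \<tau> (N (App s (Nm (Var k \<sigma>)))) (N (App t (Nm (Var k \<sigma>)))) \<in> E)) \<and>
    \<comment> \<open>Mat\<close>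
    (\<forall>x ss ts. is_var x \<longrightarrow> length ss = length ts \<longrightarrow>
       apps (Nm x) ss \<in> E \<longrightarrow> neg (apps (Nm x) ts) \<in> E \<longrightarrow>
       length ss \<ge> 1 \<and> (\<exists>i<length ss. neq_in E (ss ! i) (ts ! i))) \<and>
    \<comment> \<open>Dec\<close>
    (\<forall>\<alpha> x ss ts. is_sort \<alpha> \<longrightarrow> is_var x \<longrightarrow> length ss = length ts \<longrightarrow>
       neq \<alpha> (apps (Nm x) ss) (apps (Nm x) ts) \<in> E \<longrightarrow>
       length ss \<ge> 1 \<and> (\<exists>i<length ss. neq_in E (ss ! i) (ts ! i))) \<and>
    \<comment> \<open>Con\<close>
    (\<forall>\<alpha> s t u v. is_sort \<alpha> \<longrightarrow> eq \<alpha> s t \<in> E \<longrightarrow> neq \<alpha> u v \<in> E \<longrightarrow>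
       (neq \<alpha> s u \<in> E \<and> neq \<alpha> t u \<in> E) \<or> (neq \<alpha> s v \<in> E \<and> neq \<alpha> t v \<in> E))"

fun compat :: "(tm \<Rightarrow> tm) \<Rightarrow> tm set \<Rightarrow> ty \<Rightarrow> tm \<Rightarrow> tm \<Rightarrow> bool" where
  "compat N E (Base k) s t =
     (if k = 0 then \<not> ({N s, neg (N t)} \<subseteq> E) \<and> \<not> ({neg (N s), N t} \<subseteq> E)
      else \<not> npar E (N s) (N t))"
| "compat N E (Fn \<sigma> \<tau>) s t =
     (\<forall>u v. u \<in> Wff \<sigma> \<longrightarrow> v \<in> Wff \<sigma> \<longrightarrow> compat N E \<sigma> u v \<longrightarrow>
        compat N E \<tau> (App s u) (App t v))"

end

theory Submission
  imports Defs
begin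

lemma ty_unique: "has_ty t a \<Longrightarrow> has_ty t b \<Longrightarrow> a = b"
proof (induction t a arbitrary: b rule: has_ty.induct)
  case (1 x)
  then show ?case by (auto elim: has_ty.cases)
next
  case (2 s \<sigma> \<tau> t)
  from 2(5) obtain \<rho> where "has_ty s (Fn \<rho> b)" by (auto elim: has_ty.cases)
  with 2(3) show ?case by auto
next
  case (3 t \<tau> x)
  from 3(3) obtain \<rho> where "b = Fn (nty x) \<rho>" "has_ty t \<rho>" by (auto elim: has_ty.cases)
  with 3(2) show ?case by auto
qed

lemma neq_type:
  assumes "neq \<sigma>' a b \<in> Wff tyo" "a \<in> Wff \<sigma>"
  shows "\<sigma>' = \<sigma>"
proof -
  from assms(1) obtain \<rho> where r: "has_ty (Nm NegC) (Fn \<rho> tyo)"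
      "has_ty (App (App (Nm (EqC \<sigma>')) a) b) \<rho>"
    unfolding neq_def neg_def eq_def Wff_def by (auto elim: has_ty.cases)
  from r(2) obtain \<rho>2 where r2: "has_ty (App (Nm (EqC \<sigma>')) a) (Fn \<rho>2 \<rho>)"
    by (auto elim: has_ty.cases)
  from r2 obtain \<rho>3 where r3: "has_ty (Nm (EqC \<sigma>')) (Fn \<rho>3 (Fn \<rho>2 \<rho>))" "has_ty a \<rho>3"
    by (auto elim: has_ty.cases)
  have "has_ty (Nm (EqC \<sigma>')) (Fn \<sigma>' (Fn \<sigma>' tyo))"
    using has_ty.intros(1)[of "EqC \<sigma>'"] by simp
  with r3(1) have "\<rho>3 = \<sigma>'" using ty_unique by blast
  with r3(2) assms(2) show ?thesis unfolding Wff_def using ty_unique by blast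
qed

lemma apps_snoc: "apps h (ss @ [u]) = App (apps h ss) u"
  by (simp add: apps_def)

lemma npar_sym: "npar E a b \<Longrightarrow> npar E b a"
  by (auto simp: npar_def)

lemma main:
  assumes Nn: "is_norm N" and B: "branch N E" and ev: "evident N E"
  shows "(\<forall>s t. s \<in> Wff \<sigma> \<longrightarrow> t \<in> Wff \<sigma> \<longrightarrow>
            \<not> (compat N E \<sigma> s t \<and> npar E (N s) (N t))) \<and>
         (\<forall>x ss ts. is_var x \<longrightarrow> length ss = length ts \<longrightarrow>
            apps (Nm x) ss \<in> Wff \<sigma> \<longrightarrow> apps (Nm x) ts \<in> Wff \<sigma> \<longrightarrow>
            compat N E \<sigma> (apps (Nm x) ss) (apps (Nm x) ts) \<or>
            (\<exists>i<length ss. npar E (N (ss ! i)) (N (ts ! i))))"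
proof (induction \<sigma>)
  have N_wff: "\<And>s \<sigma>. s \<in> Wff \<sigma> \<Longrightarrow> N s \<in> Wff \<sigma>" using Nn unfolding is_norm_def by blast
  have N_apps: "\<And>y ss k. apps (Nm y) ss \<in> Wff (Base k) \<Longrightarrow> N (apps (Nm y) ss) = apps (Nm y) (map N ss)"
    using Nn unfolding is_norm_def by blast
  have BinE: "\<And>s. s \<in> E \<Longrightarrow> s \<in> Wff tyo" using B unfolding branch_def by blast
  have BE: "\<And>s t. neq tyo s t \<in> E \<Longrightarrow> (s \<in> E \<and> neg t \<in> E) \<or> (neg s \<in> E \<and> t \<in> E)"
    using ev unfolding evident_def by (elim conjE) metis
  have Mat: "\<And>x ss ts. is_var x \<Longrightarrow> length ss = length ts \<Longrightarrow>
       apps (Nm x) ss \<in> E \<Longrightarrow> neg (apps (Nm x) ts) \<in> E \<Longrightarrow>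
       (\<exists>i<length ss. neq_in E (ss ! i) (ts ! i))"
    using ev unfolding evident_def by (elim conjE) metis
  have Dec: "\<And>\<alpha> x ss ts. is_sort \<alpha> \<Longrightarrow> is_var x \<Longrightarrow> length ss = length ts \<Longrightarrow>
       neq \<alpha> (apps (Nm x) ss) (apps (Nm x) ts) \<in> E \<Longrightarrow>
       (\<exists>i<length ss. neq_in E (ss ! i) (ts ! i))"
    using ev unfolding evident_def by (elim conjE) metis
  case (Base k)
  show ?case
  proof (cases "k = 0")
    case True
    have P1: "\<not> (compat N E (Base k) s t \<and> npar E (N s) (N t))"
      if "s \<in> Wff (Base k)" "t \<in> Wff (Base k)" for s t
    proof
      assume a: "compat N E (Base k) s t \<and> npar E (N s) (N t)"
      then obtain \<sigma>' where "neq \<sigma>' (N s) (N t) \<in> E \<or> neq \<sigma>' (N t) (N s) \<in> E"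
        unfolding npar_def neq_in_def by blast
      moreover have "N s \<in> Wff tyo" "N t \<in> Wff tyo" using N_wff that True by auto
      ultimately have "neq tyo (N s) (N t) \<in> E \<or> neq tyo (N t) (N s) \<in> E"
        using neq_type BinE by metis
      then show False using BE a True by auto
    qed
    have P2: "compat N E (Base k) (apps (Nm x) ss) (apps (Nm x) ts) \<or>
            (\<exists>i<length ss. npar E (N (ss ! i)) (N (ts ! i)))"
      if hh: "is_var x" "length ss = length ts" "apps (Nm x) ss \<in> Wff (Base k)"
         "apps (Nm x) ts \<in> Wff (Base k)" for x ss ts
    proof (rule disjCI)
      assume nc: "\<not> (\<exists>i<length ss. npar E (N (ss ! i)) (N (ts ! i)))"
      have e1: "N (apps (Nm x) ss) = apps (Nm x) (map N ss)"
        and e2: "N (apps (Nm x) ts) = apps (Nm x) (map N ts)" using N_apps hh by auto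
      have "\<not> (apps (Nm x) (map N ss) \<in> E \<and> neg (apps (Nm x) (map N ts)) \<in> E)"
      proof
        assume "apps (Nm x) (map N ss) \<in> E \<and> neg (apps (Nm x) (map N ts)) \<in> E"
        then obtain i where "i < length ss" "neq_in E (map N ss ! i) (map N ts ! i)"
          using Mat[of x "map N ss" "map N ts"] hh by (metis length_map)
        then show False using nc hh by (auto simp: npar_def)
      qed
      moreover have "\<not> (apps (Nm x) (map N ts) \<in> E \<and> neg (apps (Nm x) (map N ss)) \<in> E)"
      proof
        assume "apps (Nm x) (map N ts) \<in> E \<and> neg (apps (Nm x) (map N ss)) \<in> E"
        then obtain i where "i < length ss" "neq_in E (map N ts ! i) (map N ss ! i)"
          using Mat[of x "map N ts" "map N ss"] hh by (metis length_map)
        then show False using nc hh by (auto simp: npar_def)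
      qed
      ultimately show "compat N E (Base k) (apps (Nm x) ss) (apps (Nm x) ts)"
        using True e1 e2 by auto
    qed
    show ?thesis using P1 P2 by blast
  next
    case False
    have srt: "is_sort (Base k)" using False unfolding is_sort_def by blast
    have P2: "compat N E (Base k) (apps (Nm x) ss) (apps (Nm x) ts) \<or>
            (\<exists>i<length ss. npar E (N (ss ! i)) (N (ts ! i)))"
      if hh: "is_var x" "length ss = length ts" "apps (Nm x) ss \<in> Wff (Base k)"
         "apps (Nm x) ts \<in> Wff (Base k)" for x ss ts
    proof (rule disjCI)
      assume nc: "\<not> (\<exists>i<length ss. npar E (N (ss ! i)) (N (ts ! i)))"
      have e1: "N (apps (Nm x) ss) = apps (Nm x) (map N ss)"
        and e2: "N (apps (Nm x) ts) = apps (Nm x) (map N ts)" using N_apps hh by auto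
      have w1: "apps (Nm x) (map N ss) \<in> Wff (Base k)" "apps (Nm x) (map N ts) \<in> Wff (Base k)"
        using e1 e2 N_wff hh by metis+
      have "\<not> npar E (apps (Nm x) (map N ss)) (apps (Nm x) (map N ts))"
      proof
        assume "npar E (apps (Nm x) (map N ss)) (apps (Nm x) (map N ts))"
        then obtain \<sigma>' where "neq \<sigma>' (apps (Nm x) (map N ss)) (apps (Nm x) (map N ts)) \<in> E
           \<or> neq \<sigma>' (apps (Nm x) (map N ts)) (apps (Nm x) (map N ss)) \<in> E"
          unfolding npar_def neq_in_def by blast
        then have "neq (Base k) (apps (Nm x) (map N ss)) (apps (Nm x) (map N ts)) \<in> E
           \<or> neq (Base k) (apps (Nm x) (map N ts)) (apps (Nm x) (map N ss)) \<in> E"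
          using neq_type BinE w1 by metis
        then show False
        proof
          assume "neq (Base k) (apps (Nm x) (map N ss)) (apps (Nm x) (map N ts)) \<in> E"
          then obtain i where "i < length ss" "neq_in E (map N ss ! i) (map N ts ! i)"
            using Dec[of "Base k" x "map N ss" "map N ts"] hh srt by (metis length_map)
          then show False using nc hh by (auto simp: npar_def)
        next
          assume "neq (Base k) (apps (Nm x) (map N ts)) (apps (Nm x) (map N ss)) \<in> E"
          then obtain i where "i < length ss" "neq_in E (map N ts ! i) (map N ss ! i)"
            using Dec[of "Base k" x "map N ts" "map N ss"] hh srt by (metis length_map)
          then show False using nc hh by (auto simp: npar_def)
        qed
      qed
      then show "compat N E (Base k) (apps (Nm x) ss) (apps (Nm x) ts)"
        using False e1 e2 by simp
    qed
    show ?thesis using P2 False by auto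
  qed
next
  case (Fn \<sigma> \<tau>)
  have N_wff: "\<And>s \<sigma>. s \<in> Wff \<sigma> \<Longrightarrow> N s \<in> Wff \<sigma>" using Nn unfolding is_norm_def by blast
  have N_app: "\<And>s t \<sigma> \<tau>. s \<in> Wff (Fn \<sigma> \<tau>) \<Longrightarrow> t \<in> Wff \<sigma> \<Longrightarrow> N (App (N s) t) = N (App s t)"
    using Nn unfolding is_norm_def by blast
  have BinE: "\<And>s. s \<in> E \<Longrightarrow> s \<in> Wff tyo" using B unfolding branch_def by blast
  have FE: "\<And>s t. neq (Fn \<sigma> \<tau>) s t \<in> E \<Longrightarrow>
       (\<exists>k. neq \<tau> (N (App s (Nm (Var k \<sigma>)))) (N (App t (Nm (Var k \<sigma>)))) \<in> E)"
    using ev unfolding evident_def by (elim conjE) metis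
  have appW: "\<And>s u. s \<in> Wff (Fn \<sigma> \<tau>) \<Longrightarrow> u \<in> Wff \<sigma> \<Longrightarrow> App s u \<in> Wff \<tau>"
    unfolding Wff_def using has_ty.intros(2) by blast
  have varW: "\<And>k. Nm (Var k \<sigma>) \<in> Wff \<sigma>"
    unfolding Wff_def using has_ty.intros(1)[of "Var _ \<sigma>"] by simp
  have IH1s: "\<And>s t. s \<in> Wff \<sigma> \<Longrightarrow> t \<in> Wff \<sigma> \<Longrightarrow> \<not> (compat N E \<sigma> s t \<and> npar E (N s) (N t))"
    using Fn.IH(1) by blast
  have IH1t: "\<And>s t. s \<in> Wff \<tau> \<Longrightarrow> t \<in> Wff \<tau> \<Longrightarrow> \<not> (compat N E \<tau> s t \<and> npar E (N s) (N t))"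
    using Fn.IH(2) by blast
  have IH2s: "\<And>x ss ts. is_var x \<Longrightarrow> length ss = length ts \<Longrightarrow>
            apps (Nm x) ss \<in> Wff \<sigma> \<Longrightarrow> apps (Nm x) ts \<in> Wff \<sigma> \<Longrightarrow>
            compat N E \<sigma> (apps (Nm x) ss) (apps (Nm x) ts) \<or>
            (\<exists>i<length ss. npar E (N (ss ! i)) (N (ts ! i)))"
    using Fn.IH(1) by blast
  have IH2t: "\<And>x ss ts. is_var x \<Longrightarrow> length ss = length ts \<Longrightarrow>
            apps (Nm x) ss \<in> Wff \<tau> \<Longrightarrow> apps (Nm x) ts \<in> Wff \<tau> \<Longrightarrow>
            compat N E \<tau> (apps (Nm x) ss) (apps (Nm x) ts) \<or>
            (\<exists>i<length ss. npar E (N (ss ! i)) (N (ts ! i)))"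
    using Fn.IH(2) by blast
  have cv: "compat N E \<sigma> (Nm (Var k \<sigma>)) (Nm (Var k \<sigma>))" for k
    using IH2s[of "Var k \<sigma>" "[]" "[]"] varW by (simp add: apps_def is_var_def)
  have P1: "\<not> (compat N E (Fn \<sigma> \<tau>) s t \<and> npar E (N s) (N t))"
    if ws: "s \<in> Wff (Fn \<sigma> \<tau>)" "t \<in> Wff (Fn \<sigma> \<tau>)" for s t
  proof
    assume a: "compat N E (Fn \<sigma> \<tau>) s t \<and> npar E (N s) (N t)"
    then obtain \<sigma>' where "neq \<sigma>' (N s) (N t) \<in> E \<or> neq \<sigma>' (N t) (N s) \<in> E"
      unfolding npar_def neq_in_def by blast
    moreover have "N s \<in> Wff (Fn \<sigma> \<tau>)" "N t \<in> Wff (Fn \<sigma> \<tau>)" using N_wff that by auto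
    ultimately have "neq (Fn \<sigma> \<tau>) (N s) (N t) \<in> E \<or> neq (Fn \<sigma> \<tau>) (N t) (N s) \<in> E"
      using neq_type BinE by metis
    then obtain k where "npar E (N (App (N s) (Nm (Var k \<sigma>)))) (N (App (N t) (Nm (Var k \<sigma>))))"
      using FE unfolding npar_def neq_in_def by metis
    then have np: "npar E (N (App s (Nm (Var k \<sigma>)))) (N (App t (Nm (Var k \<sigma>))))"
      using N_app ws varW by metis
    have "compat N E \<tau> (App s (Nm (Var k \<sigma>))) (App t (Nm (Var k \<sigma>)))"
      using a cv varW by auto
    then show False using IH1t np appW ws varW by blast
  qed
  have P2: "compat N E (Fn \<sigma> \<tau>) (apps (Nm x) ss) (apps (Nm x) ts) \<or>
            (\<exists>i<length ss. npar E (N (ss ! i)) (N (ts ! i)))"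
    if h: "is_var x" "length ss = length ts" "apps (Nm x) ss \<in> Wff (Fn \<sigma> \<tau>)"
         "apps (Nm x) ts \<in> Wff (Fn \<sigma> \<tau>)" for x ss ts
  proof (rule disjCI)
    assume nc: "\<not> (\<exists>i<length ss. npar E (N (ss ! i)) (N (ts ! i)))"
    show "compat N E (Fn \<sigma> \<tau>) (apps (Nm x) ss) (apps (Nm x) ts)"
      unfolding compat.simps
    proof (intro allI impI)
      fix u v assume u: "u \<in> Wff \<sigma>" and v: "v \<in> Wff \<sigma>" and c: "compat N E \<sigma> u v"
      have "compat N E \<tau> (apps (Nm x) (ss @ [u])) (apps (Nm x) (ts @ [v])) \<or>
            (\<exists>i<length (ss @ [u]). npar E (N ((ss @ [u]) ! i)) (N ((ts @ [v]) ! i)))"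
        using IH2t[of x "ss @ [u]" "ts @ [v]"] h u v appW by (simp add: apps_snoc)
      moreover have "\<not> (\<exists>i<length (ss @ [u]). npar E (N ((ss @ [u]) ! i)) (N ((ts @ [v]) ! i)))"
      proof
        assume "\<exists>i<length (ss @ [u]). npar E (N ((ss @ [u]) ! i)) (N ((ts @ [v]) ! i))"
        then obtain i where i: "i < Suc (length ss)"
          "npar E (N ((ss @ [u]) ! i)) (N ((ts @ [v]) ! i))" by auto
        show False
        proof (cases "i < length ss")
          case True
          then show False using i nc h(2) by (auto simp: nth_append)
        next
          case False
          then have "i = length ss" using i by auto
          then have "npar E (N u) (N v)" using i h(2) by (auto simp: nth_append)
          then show False using IH1s u v c by blast
        qed
      qed
      ultimately show "compat N E \<tau> (App (apps (Nm x) ss) u) (App (apps (Nm x) ts) v)"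
        by (simp only: apps_snoc) blast
    qed
  qed
  show ?case using P1 P2 by blast
qed

theorem lemma6p5:
  fixes N :: "tm \<Rightarrow> tm" and E :: "tm set"
  assumes "is_norm N" and "branch N E" and "evident N E"
  shows "(\<forall>\<sigma> s t. s \<in> Wff \<sigma> \<longrightarrow> t \<in> Wff \<sigma> \<longrightarrow>
            \<not> (compat N E \<sigma> s t \<and> npar E (N s) (N t))) \<and>
         (\<forall>\<sigma> x ss ts. is_var x \<longrightarrow> length ss = length ts \<longrightarrow>
            apps (Nm x) ss \<in> Wff \<sigma> \<longrightarrow> apps (Nm x) ts \<in> Wff \<sigma> \<longrightarrow>
            compat N E \<sigma> (apps (Nm x) ss) (apps (Nm x) ts) \<or>
            (\<exists>i<length ss. npar E (N (ss ! i)) (N (ts ! i))))"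
  using main[OF assms] by blast

end
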